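(* Let $f_0$ be a probability density on $[0,1]$ with $0<\rho_0\le f_0\le D_0<\infty$, and let $X_1,\dots,X_n$ be i.i.d. with density $f_0$. Let $(a_n)$ be real numbers with $na_n^2\ge1$ for all $n\ge1$, and let $(\Pi_n)$ be priors on probability densities on $[0,1]$ that are bounded and bounded away from $0$, each $\Pi_n$ supported in $\{f: h(f,f_0)\le a_n\}$. Let $(\gamma_n)\subset L^\infty[0,1]$, $\tilde\gamma_n=\gamma_n-\int_0^1\gamma_nf_0$, and suppose for some $m>0$ and all $n\ge1$, $$\|\tilde\gamma_n\|_L\le m,\qquad\|\tilde\gamma_n\|_\infty\le\big(4a_n\log(n+1)\big)^{-1}.$$ Then there exists $C>0$ depending only on $m$ and $\|f_0\|_\infty$ such that for every $n\ge1$ and every real $t$ with $|t|\le\log n$, $$E^{\Pi_n}\big[e^{t\sqrt n\langle f-f_0,\gamma_n\rangle_2}\mid X^{(n)}\big]\le e^{Ct^2+tW_n(\gamma_n)}\,\frac{\int e^{\ell_n(f_t)-\ell_n(f_0)}\,d\Pi_n(f)}{\int e^{\ell_n(f)-\ell_n(f_0)}\,d\Pi_n(f)},$$ where $f_t=f\,e^{-t\tilde\gamma_n/\sqrt n}\big/\int_0^1f\,e^{-t\tilde\gamma_n/\sqrt n}$.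
   Context: $\ell_n(f)=\sum_{i=1}^n\log f(X_i)$. For $u\in L^2(f_0)$, $\|u\|_L^2=\int_0^1(u-\int uf_0)^2f_0$ and $W_n(u)=n^{-1/2}\sum_{i=1}^n\big(u(X_i)-\int_0^1uf_0\big)$. $h$ is the Hellinger distance, $h(f,g)^2=\int_0^1(\sqrt f-\sqrt g)^2$. $E^{\Pi_n}[\cdot\mid X^{(n)}]$ is expectation under the posterior $d\Pi_n(f\mid X^{(n)})\propto e^{\ell_n(f)}d\Pi_n(f)$. *)

theory Defs
  imports "HOL-Probability.Probability"
begin

definition loglik :: "nat \<Rightarrow> (nat \<Rightarrow> real) \<Rightarrow> (real \<Rightarrow> real) \<Rightarrow> real" where
  "loglik n X f = (\<Sum>i=1..n. ln (f (X i)))"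

definition density01 :: "(real \<Rightarrow> real) \<Rightarrow> bool" where
  "density01 f \<longleftrightarrow> set_borel_measurable lborel {0..1} f \<and> (\<forall>x\<in>{0..1}. 0 \<le> f x)
     \<and> set_integrable lborel {0..1} f \<and> (LINT x:{0..1}|lborel. f x) = 1"

definition Linf01 :: "(real \<Rightarrow> real) \<Rightarrow> bool" where
  "Linf01 u \<longleftrightarrow> set_borel_measurable lborel {0..1} u
     \<and> (\<exists>B. AE x in lborel. x \<in> {0..1} \<longrightarrow> \<bar>u x\<bar> \<le> B)"

definition hellinger :: "(real \<Rightarrow> real) \<Rightarrow> (real \<Rightarrow> real) \<Rightarrow> real" where
  "hellinger f g = sqrt (LINT x:{0..1}|lborel. (sqrt (f x) - sqrt (g x))\<^sup>2)"

definition inner2 :: "(real \<Rightarrow> real) \<Rightarrow> (real \<Rightarrow> real) \<Rightarrow> real" where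
  "inner2 f g = (LINT x:{0..1}|lborel. f x * g x)"

definition center :: "(real \<Rightarrow> real) \<Rightarrow> (real \<Rightarrow> real) \<Rightarrow> real \<Rightarrow> real" where
  "center f0 u = (\<lambda>x. u x - (LINT y:{0..1}|lborel. u y * f0 y))"

definition normL :: "(real \<Rightarrow> real) \<Rightarrow> (real \<Rightarrow> real) \<Rightarrow> real" where
  "normL f0 u = sqrt (LINT x:{0..1}|lborel. (center f0 u x)\<^sup>2 * f0 x)"

definition Wn :: "(real \<Rightarrow> real) \<Rightarrow> nat \<Rightarrow> (nat \<Rightarrow> real) \<Rightarrow> (real \<Rightarrow> real) \<Rightarrow> real" where
  "Wn f0 n X u = (\<Sum>i=1..n. center f0 u (X i)) / sqrt (real n)"

definition tilt :: "nat \<Rightarrow> real \<Rightarrow> (real \<Rightarrow> real) \<Rightarrow> (real \<Rightarrow> real) \<Rightarrow> real \<Rightarrow> real" where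
  "tilt n t g f = (\<lambda>x. f x * exp (- t * g x / sqrt (real n))
      / (LINT y:{0..1}|lborel. f y * exp (- t * g y / sqrt (real n))))"

text \<open>Posterior expectation of a nonnegative functional phi, for posterior proportional to exp(loglik) dP.\<close>
definition post_exp :: "(real \<Rightarrow> real) measure \<Rightarrow> nat \<Rightarrow> (nat \<Rightarrow> real) \<Rightarrow> ((real \<Rightarrow> real) \<Rightarrow> real) \<Rightarrow> ennreal" where
  "post_exp P n X \<phi> = (\<integral>\<^sup>+ f. ennreal (\<phi> f * exp (loglik n X f)) \<partial>P) / (\<integral>\<^sup>+ f. ennreal (exp (loglik n X f)) \<partial>P)"

end

theory Submission
  imports Defs
begin


lemma int_mult_bdd:
  fixes f h :: "'a \<Rightarrow> real"
  assumes "integrable M f" "h \<in> borel_measurable M" "AE x in M. \<bar>h x\<bar> \<le> K"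
  shows "integrable M (\<lambda>x. f x * h x)"
proof (rule Bochner_Integration.integrable_bound[where f="\<lambda>x. K * f x"])
  show "integrable M (\<lambda>x. K * f x)" using assms(1) by simp
  show "(\<lambda>x. f x * h x) \<in> borel_measurable M" using assms by (intro borel_measurable_times) (auto dest: borel_measurable_integrable)
  show "AE x in M. norm (f x * h x) \<le> norm (K * f x)"
    using assms(3)
  proof eventually_elim
    case (elim x)
    hence "K \<ge> 0" by linarith
    hence "\<bar>K * f x\<bar> = K * \<bar>f x\<bar>" by (simp add: abs_mult)
    moreover have "\<bar>f x * h x\<bar> \<le> \<bar>f x\<bar> * K" using elim by (simp add: abs_mult mult_left_mono)
    ultimately show ?case by (simp add: mult.commute)
  qed
qed

lemma exp_quad: fixes x :: real assumes "\<bar>x\<bar> \<le> 1" shows "exp x - 1 - x \<le> x\<^sup>2"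
proof (cases "x \<ge> 0")
  case True thus ?thesis using exp_bound[of x] assms by auto
next
  case False
  have "exp x \<le> 1 + x + x\<^sup>2"
  proof -
    have a: "exp (-x) \<ge> 1 - x" using exp_ge_add_one_self[of "-x"] by simp
    have b: "exp x * exp (-x) = 1" by (simp add: exp_minus)
    have c: "(1 + x + x\<^sup>2) * (1 - x) = 1 - x^3" by (simp add: algebra_simps power2_eq_square power3_eq_cube)
    have d: "x^3 \<le> 0"
    proof -
      have "x^3 = x\<^sup>2 * x" by (simp add: power2_eq_square power3_eq_cube)
      also have "\<dots> \<le> 0" using False by (intro mult_nonneg_nonpos) auto
      finally show ?thesis .
    qed
    have "exp x * (1 - x) \<le> exp x * exp (-x)" using a by (intro mult_left_mono) auto
    also have "\<dots> \<le> (1 + x + x\<^sup>2) * (1 - x)" using b c d by simp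
    finally show ?thesis using False by (simp add: mult_le_cancel_right)
  qed
  thus ?thesis by simp
qed



lemma sq2: fixes a b :: real shows "(a - b)\<^sup>2 \<le> 2 * a\<^sup>2 + 2 * b\<^sup>2" "(a + b)\<^sup>2 \<le> 2 * a\<^sup>2 + 2 * b\<^sup>2"
proof -
  have "2 * a\<^sup>2 + 2 * b\<^sup>2 - (a - b)\<^sup>2 = (a + b)\<^sup>2" "2 * a\<^sup>2 + 2 * b\<^sup>2 - (a + b)\<^sup>2 = (a - b)\<^sup>2"
    by (simp_all add: power2_eq_square algebra_simps)
  thus "(a - b)\<^sup>2 \<le> 2 * a\<^sup>2 + 2 * b\<^sup>2" "(a + b)\<^sup>2 \<le> 2 * a\<^sup>2 + 2 * b\<^sup>2"
    using zero_le_power2[of "a+b"] zero_le_power2[of "a-b"] by linarith+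
qed

lemma core:
  fixes M :: "'a measure" and f f0 \<gamma> :: "'a \<Rightarrow> real" and n :: nat and t c bd h2 m k :: real
  assumes fin: "finite_measure M" and pos: "measure M (space M) > 0"
  and mf[measurable]: "f \<in> borel_measurable M" and mf0[measurable]: "f0 \<in> borel_measurable M"
  and mg[measurable]: "\<gamma> \<in> borel_measurable M"
  and fc: "\<forall>x\<in>space M. c \<le> f x" and c: "c > 0"
  and f0nn: "\<forall>x\<in>space M. 0 \<le> f0 x"
  and intf: "integrable M f" and intf0: "integrable M f0"
  and f1: "integral\<^sup>L M f = 1" and f01: "integral\<^sup>L M f0 = 1"
  and gb: "AE x in M. \<bar>\<gamma> x\<bar> \<le> B"
  and kdef: "k = integral\<^sup>L M (\<lambda>y. \<gamma> y * f0 y)"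
  and gbd: "AE x in M. \<bar>\<gamma> x - k\<bar> \<le> bd" and bd0: "bd \<ge> 0"
  and tb: "\<bar>t\<bar> * bd \<le> sqrt (real n) / 4"
  and n: "n > 0"
  and hel: "integral\<^sup>L M (\<lambda>x. (sqrt (f x) - sqrt (f0 x))\<^sup>2) \<le> h2"
  and bh: "2 * bd\<^sup>2 * h2 \<le> 1"
  and mm: "integral\<^sup>L M (\<lambda>x. (\<gamma> x - k)\<^sup>2 * f0 x) \<le> m\<^sup>2"
  shows "integral\<^sup>L M (\<lambda>x. f x * exp (- t * (\<gamma> x - k) / sqrt (real n))) > 0 \<and>
   t * sqrt (real n) * integral\<^sup>L M (\<lambda>x. (f x - f0 x) * \<gamma> x)
    + real n * ln (integral\<^sup>L M (\<lambda>x. f x * exp (- t * (\<gamma> x - k) / sqrt (real n)))) \<le> (2*m\<^sup>2+1)*t\<^sup>2"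
proof -
  interpret finite_measure M by (rule fin)
  define g where "g = (\<lambda>x. \<gamma> x - k)"
  define s where "s = t / sqrt (real n)"
  define E where "E = (\<lambda>x. exp (- t * g x / sqrt (real n)))"
  define Z where "Z = integral\<^sup>L M (\<lambda>x. f x * E x)"
  have [measurable]: "g \<in> borel_measurable M" unfolding g_def by measurable
  have [measurable]: "E \<in> borel_measurable M" unfolding E_def by measurable
  have sqn: "sqrt (real n) > 0" using n by simp
  have gbd': "AE x in M. \<bar>g x\<bar> \<le> bd" using gbd unfolding g_def .
  have ifg0: "integrable M (\<lambda>x. f x * \<gamma> x)" by (rule int_mult_bdd[OF intf mg gb])
  have if0g0: "integrable M (\<lambda>x. f0 x * \<gamma> x)" by (rule int_mult_bdd[OF intf0 mg gb])
  have ifg: "integrable M (\<lambda>x. f x * g x)" by (rule int_mult_bdd[OF intf _ gbd']) simp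
  have if0g: "integrable M (\<lambda>x. f0 x * g x)" by (rule int_mult_bdd[OF intf0 _ gbd']) simp
  have k': "k = integral\<^sup>L M (\<lambda>y. f0 y * \<gamma> y)" unfolding kdef by (simp add: mult.commute)
  have e0: "integral\<^sup>L M (\<lambda>x. f x * g x) = integral\<^sup>L M (\<lambda>x. f x * \<gamma> x) - k"
  proof -
    have "integral\<^sup>L M (\<lambda>x. f x * g x) = integral\<^sup>L M (\<lambda>x. f x * \<gamma> x - k * f x)"
      unfolding g_def by (simp add: algebra_simps)
    also have "\<dots> = integral\<^sup>L M (\<lambda>x. f x * \<gamma> x) - k * integral\<^sup>L M f"
      using ifg0 intf by simp
    finally show ?thesis using f1 by simp
  qed
  have e1: "integral\<^sup>L M (\<lambda>x. (f x - f0 x) * \<gamma> x) = integral\<^sup>L M (\<lambda>x. f x * g x)"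
  proof -
    have "integral\<^sup>L M (\<lambda>x. (f x - f0 x) * \<gamma> x) = integral\<^sup>L M (\<lambda>x. f x * \<gamma> x - f0 x * \<gamma> x)"
      by (simp add: algebra_simps)
    also have "\<dots> = integral\<^sup>L M (\<lambda>x. f x * \<gamma> x) - k" using ifg0 if0g0 k' by simp
    finally show ?thesis using e0 by simp
  qed
  have sg: "AE x in M. \<bar>s * g x\<bar> \<le> 1/4"
    using gbd'
  proof eventually_elim
    case (elim x)
    have "\<bar>s * g x\<bar> = \<bar>t\<bar> * \<bar>g x\<bar> / sqrt (real n)" unfolding s_def using sqn by (simp add: abs_mult)
    also have "\<dots> \<le> \<bar>t\<bar> * bd / sqrt (real n)" using elim sqn by (intro divide_right_mono mult_left_mono) auto
    also have "\<dots> \<le> 1/4" using tb sqn by (simp add: divide_simps)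
    finally show ?case .
  qed
  have Es: "E x = exp (- (s * g x))" for x unfolding E_def s_def by simp
  have Eb: "AE x in M. \<bar>E x\<bar> \<le> exp (1/4)"
    using sg by eventually_elim (simp add: Es)
  have ifE: "integrable M (\<lambda>x. f x * E x)" by (rule int_mult_bdd[OF intf _ Eb]) simp
  have Zpos: "Z > 0"
  proof -
    have "AE x in M. c * exp (-1/4) \<le> f x * E x"
      using sg
    proof (rule AE_mp, intro AE_I2 impI)
      fix x assume x: "x \<in> space M" and h: "\<bar>s * g x\<bar> \<le> 1/4"
      have "exp (-1/4) \<le> E x" unfolding Es using h by simp
      thus "c * exp (-1/4) \<le> f x * E x" using fc x c by (intro mult_mono) auto
    qed
    hence "integral\<^sup>L M (\<lambda>x. c * exp (-1/4)) \<le> Z" unfolding Z_def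
      by (intro integral_mono_AE ifE) auto
    moreover have "integral\<^sup>L M (\<lambda>x. c * exp (-1/4)) > 0" using pos c by simp
    ultimately show ?thesis by simp
  qed
  have lnZ: "ln Z \<le> Z - 1" using Zpos by (rule ln_le_minus_one)
  define R where "R = (\<lambda>x. f x * E x - f x + s * (f x * g x))"
  have iR: "integrable M R" unfolding R_def using ifE intf ifg by auto
  have intR: "integral\<^sup>L M R = Z - 1 + s * integral\<^sup>L M (\<lambda>x. f x * g x)"
    unfolding R_def Z_def using ifE intf ifg f1 by simp
  have g2b: "AE x in M. \<bar>(g x)\<^sup>2\<bar> \<le> bd\<^sup>2" using gbd'
    by eventually_elim (simp, metis abs_ge_zero power_mono power2_abs)
  have ifg2: "integrable M (\<lambda>x. f x * (g x)\<^sup>2)" by (rule int_mult_bdd[OF intf _ g2b]) simp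
  have if0g2: "integrable M (\<lambda>x. f0 x * (g x)\<^sup>2)" by (rule int_mult_bdd[OF intf0 _ g2b]) simp
  have Rle: "integral\<^sup>L M R \<le> integral\<^sup>L M (\<lambda>x. s\<^sup>2 * (f x * (g x)\<^sup>2))"
  proof (rule integral_mono_AE[OF iR])
    show "integrable M (\<lambda>x. s\<^sup>2 * (f x * (g x)\<^sup>2))" using ifg2 by simp
    show "AE x in M. R x \<le> s\<^sup>2 * (f x * (g x)\<^sup>2)"
      using sg
    proof (rule AE_mp, intro AE_I2 impI)
      fix x assume x: "x \<in> space M" and h: "\<bar>s * g x\<bar> \<le> 1/4"
      have "exp (- (s * g x)) - 1 - (- (s * g x)) \<le> (- (s * g x))\<^sup>2"
        by (rule exp_quad) (use h in simp)
      hence "E x - 1 + s * g x \<le> s\<^sup>2 * (g x)\<^sup>2" by (simp add: Es power_mult_distrib)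
      hence "f x * (E x - 1 + s * g x) \<le> f x * (s\<^sup>2 * (g x)\<^sup>2)"
        using fc x c by (intro mult_left_mono) auto
      thus "R x \<le> s\<^sup>2 * (f x * (g x)\<^sup>2)" unfolding R_def by (simp add: algebra_simps)
    qed
  qed
  define d where "d = (\<lambda>x. sqrt (f x) - sqrt (f0 x))"
  have [measurable]: "d \<in> borel_measurable M" unfolding d_def by measurable
  have id2: "integrable M (\<lambda>x. (d x)\<^sup>2)"
  proof (rule Bochner_Integration.integrable_bound[where f="\<lambda>x. 2 * f x + 2 * f0 x"])
    show "integrable M (\<lambda>x. 2 * f x + 2 * f0 x)" using intf intf0 by simp
    show "(\<lambda>x. (d x)\<^sup>2) \<in> borel_measurable M" by measurable
    show "AE x in M. norm ((d x)\<^sup>2) \<le> norm (2 * f x + 2 * f0 x)"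
    proof (intro AE_I2)
      fix x assume x: "x \<in> space M"
      have f: "f x \<ge> 0" "f0 x \<ge> 0" using fc f0nn x c by force+
      have "(d x)\<^sup>2 \<le> 2 * (sqrt (f x))\<^sup>2 + 2 * (sqrt (f0 x))\<^sup>2" unfolding d_def
        by (rule sq2)
      thus "norm ((d x)\<^sup>2) \<le> norm (2 * f x + 2 * f0 x)" using f by simp
    qed
  qed
  have id2g2: "integrable M (\<lambda>x. (d x)\<^sup>2 * (g x)\<^sup>2)" by (rule int_mult_bdd[OF id2 _ g2b]) simp
  have fg2le: "integral\<^sup>L M (\<lambda>x. f x * (g x)\<^sup>2) \<le> integral\<^sup>L M (\<lambda>x. 2 * (f0 x * (g x)\<^sup>2) + 2 * ((d x)\<^sup>2 * (g x)\<^sup>2))"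
  proof (rule integral_mono[OF ifg2])
    show "integrable M (\<lambda>x. 2 * (f0 x * (g x)\<^sup>2) + 2 * ((d x)\<^sup>2 * (g x)\<^sup>2))" using if0g2 id2g2 by simp
    fix x assume x: "x \<in> space M"
    have f: "f x \<ge> 0" "f0 x \<ge> 0" using fc f0nn x c by force+
    have "f x = (sqrt (f0 x) + d x)\<^sup>2" unfolding d_def using f by simp
    also have "\<dots> \<le> 2 * (sqrt (f0 x))\<^sup>2 + 2 * (d x)\<^sup>2"
      by (rule sq2)
    finally have "f x \<le> 2 * f0 x + 2 * (d x)\<^sup>2" using f by simp
    hence "f x * (g x)\<^sup>2 \<le> (2 * f0 x + 2 * (d x)\<^sup>2) * (g x)\<^sup>2" by (intro mult_right_mono) auto
    thus "f x * (g x)\<^sup>2 \<le> 2 * (f0 x * (g x)\<^sup>2) + 2 * ((d x)\<^sup>2 * (g x)\<^sup>2)" by (simp add: algebra_simps)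
  qed
  have t1: "integral\<^sup>L M (\<lambda>x. f0 x * (g x)\<^sup>2) \<le> m\<^sup>2" using mm unfolding g_def by (simp add: mult.commute)
  have t2: "integral\<^sup>L M (\<lambda>x. (d x)\<^sup>2 * (g x)\<^sup>2) \<le> bd\<^sup>2 * h2"
  proof -
    have "integral\<^sup>L M (\<lambda>x. (d x)\<^sup>2 * (g x)\<^sup>2) \<le> integral\<^sup>L M (\<lambda>x. bd\<^sup>2 * (d x)\<^sup>2)"
    proof (rule integral_mono_AE[OF id2g2])
      show "integrable M (\<lambda>x. bd\<^sup>2 * (d x)\<^sup>2)" using id2 by simp
      show "AE x in M. (d x)\<^sup>2 * (g x)\<^sup>2 \<le> bd\<^sup>2 * (d x)\<^sup>2" using g2b
        proof eventually_elim
        case (elim x)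
        have "(d x)\<^sup>2 * \<bar>(g x)\<^sup>2\<bar> \<le> (d x)\<^sup>2 * bd\<^sup>2" by (rule mult_left_mono[OF elim]) simp
        thus ?case by (simp add: mult.commute)
      qed
    qed
    also have "\<dots> = bd\<^sup>2 * integral\<^sup>L M (\<lambda>x. (d x)\<^sup>2)" by simp
    also have "\<dots> \<le> bd\<^sup>2 * h2" using hel unfolding d_def by (intro mult_left_mono) auto
    finally show ?thesis .
  qed
  have fg2: "integral\<^sup>L M (\<lambda>x. f x * (g x)\<^sup>2) \<le> 2*m\<^sup>2+1"
  proof -
    have "integral\<^sup>L M (\<lambda>x. 2 * (f0 x * (g x)\<^sup>2) + 2 * ((d x)\<^sup>2 * (g x)\<^sup>2))
       = 2 * integral\<^sup>L M (\<lambda>x. f0 x * (g x)\<^sup>2) + 2 * integral\<^sup>L M (\<lambda>x. (d x)\<^sup>2 * (g x)\<^sup>2)"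
      using if0g2 id2g2 by simp
    thus ?thesis using fg2le t1 t2 bh by linarith
  qed
  have ns: "real n * s = t * sqrt (real n)" unfolding s_def using sqn
    by (simp add: field_simps)
  have ns2: "real n * s\<^sup>2 = t\<^sup>2" unfolding s_def using sqn by (simp add: power_divide)
  have "t * sqrt (real n) * integral\<^sup>L M (\<lambda>x. (f x - f0 x) * \<gamma> x) + real n * ln Z
      \<le> real n * s * integral\<^sup>L M (\<lambda>x. f x * g x) + real n * (Z - 1)"
    using e1 ns lnZ n by (simp add: mult_left_mono)
  also have "\<dots> = real n * integral\<^sup>L M R" by (simp only: intR) (simp add: algebra_simps)
  also have "\<dots> \<le> real n * (s\<^sup>2 * integral\<^sup>L M (\<lambda>x. f x * (g x)\<^sup>2))"
    using Rle by (intro mult_left_mono) auto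
  also have "\<dots> = t\<^sup>2 * integral\<^sup>L M (\<lambda>x. f x * (g x)\<^sup>2)" using ns2 by (simp add: mult.assoc[symmetric])
  also have "\<dots> \<le> t\<^sup>2 * (2*m\<^sup>2+1)" using fg2 by (intro mult_left_mono) auto
  finally show ?thesis using Zpos unfolding Z_def E_def g_def by (simp add: mult.commute)
qed



abbreviation "M01 \<equiv> restrict_space lborel {0..1::real}"

lemma M01_space: "space M01 = {0..1}" by (simp add: space_restrict_space)

lemma M01_fin: "finite_measure M01" and M01_meas: "measure M01 (space M01) = 1"
proof -
  have e: "emeasure M01 (space M01) = 1"
    by (simp add: M01_space emeasure_restrict_space)
  thus "finite_measure M01" by (intro finite_measureI) simp
  show "measure M01 (space M01) = 1" using e by (simp add: measure_def)
qed

lemma M01_meas_iff: fixes u :: "real \<Rightarrow> real" shows "set_borel_measurable lborel {0..1} u \<Longrightarrow> u \<in> borel_measurable M01"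
  unfolding set_borel_measurable_def using borel_measurable_restrict_space_iff[of "{0..1::real}" lborel u] by simp

lemma M01_int_iff: fixes u :: "real \<Rightarrow> real" shows "set_integrable lborel {0..1::real} u \<longleftrightarrow> integrable M01 u"
  unfolding set_integrable_def using integrable_restrict_space[of "{0..1::real}" lborel u] by simp

lemma M01_integral: fixes u :: "real \<Rightarrow> real" shows "(LINT x:{0..1::real}|lborel. u x) = integral\<^sup>L M01 u"
  unfolding set_lebesgue_integral_def using integral_restrict_space[of "{0..1::real}" lborel u] by simp

lemma M01_AE: "(AE x in lborel. x \<in> {0..1::real} \<longrightarrow> P x) \<Longrightarrow> (AE x in M01. P x)"
  by (subst AE_restrict_space_iff) auto




lemma pointwise:
  fixes f0 f \<gamma> :: "real \<Rightarrow> real" and n :: nat and t a c m :: real and X :: "nat \<Rightarrow> real"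
  assumes d0: "density01 f0" and df: "density01 f" and c: "c > 0" and fc: "\<forall>x\<in>{0..1}. c \<le> f x"
  and hel: "hellinger f f0 \<le> a" and na: "real n * a\<^sup>2 \<ge> 1" and n: "n \<ge> 1"
  and Lg: "Linf01 \<gamma>" and nL: "normL f0 (center f0 \<gamma>) \<le> m"
  and gb: "AE x in lborel. x \<in> {0..1} \<longrightarrow> \<bar>center f0 \<gamma> x\<bar> \<le> 1 / (4 * a * ln (real n + 1))"
  and tn: "\<bar>t\<bar> \<le> ln (real n)" and Xs: "\<forall>i\<in>{1..n}. X i \<in> {0..1}"
  shows "exp (t * sqrt (real n) * inner2 (\<lambda>x. f x - f0 x) \<gamma>) * exp (loglik n X f)
     \<le> exp ((2*m\<^sup>2+1) * t\<^sup>2 + t * Wn f0 n X \<gamma>) * exp (loglik n X f0)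
        * exp (loglik n X (tilt n t (center f0 \<gamma>) f) - loglik n X f0)"
proof -
  define k where "k = (LINT y:{0..1}|lborel. \<gamma> y * f0 y)"
  have cen: "center f0 \<gamma> = (\<lambda>x. \<gamma> x - k)" unfolding center_def k_def ..
  have d0': "set_borel_measurable lborel {0..1} f0" "\<forall>x\<in>{0..1}. 0 \<le> f0 x"
     "set_integrable lborel {0..1} f0" "(LINT x:{0..1}|lborel. f0 x) = 1" using d0 unfolding density01_def by blast+
  have f0m: "f0 \<in> borel_measurable M01" by (rule M01_meas_iff[OF d0'(1)])
  have f0nn: "\<forall>x\<in>space M01. 0 \<le> f0 x" using d0'(2) by (simp only: M01_space)
  have if0: "integrable M01 f0" using d0'(3) by (simp only: M01_int_iff)
  have f01: "integral\<^sup>L M01 f0 = 1" using d0'(4) by (simp only: M01_integral)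
  have df': "set_borel_measurable lborel {0..1} f"
     "set_integrable lborel {0..1} f" "(LINT x:{0..1}|lborel. f x) = 1" using df unfolding density01_def by blast+
  have fm: "f \<in> borel_measurable M01" by (rule M01_meas_iff[OF df'(1)])
  have iff: "integrable M01 f" using df'(2) by (simp only: M01_int_iff)
  have f1: "integral\<^sup>L M01 f = 1" using df'(3) by (simp only: M01_integral)
  have fc': "\<forall>x\<in>space M01. c \<le> f x" using fc by (simp add: M01_space)
  from Lg obtain B where gm0: "set_borel_measurable lborel {0..1} \<gamma>" and gB0: "AE x in lborel. x \<in> {0..1} \<longrightarrow> \<bar>\<gamma> x\<bar> \<le> B"
    unfolding Linf01_def by blast
  have gm: "\<gamma> \<in> borel_measurable M01" by (rule M01_meas_iff[OF gm0])
  have gB: "AE x in M01. \<bar>\<gamma> x\<bar> \<le> B" by (rule M01_AE[OF gB0])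
  have hnn: "hellinger f f0 \<ge> 0" unfolding hellinger_def M01_integral by (intro real_sqrt_ge_zero Bochner_Integration.integral_nonneg) simp
  have a0: "a > 0"
  proof -
    have "a \<ge> 0" using hnn hel by linarith
    moreover have "a \<noteq> 0" using na by auto
    ultimately show ?thesis by simp
  qed
  define L where "L = ln (real n + 1)"
  have L: "L \<ge> 2/3"
  proof -
    have "ln 2 \<le> L" unfolding L_def using n by (subst ln_le_cancel_iff) auto
    thus ?thesis using ln2_ge_two_thirds by linarith
  qed
  define bd where "bd = 1 / (4 * a * L)"
  have bd0: "bd \<ge> 0" unfolding bd_def using a0 L by simp
  have sqna: "sqrt (real n) * a \<ge> 1"
  proof -
    have "sqrt (real n * a\<^sup>2) \<ge> 1" using na by simp
    thus ?thesis using a0 by (simp add: real_sqrt_mult)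
  qed
  have lnn: "ln (real n) \<le> L" unfolding L_def using n by (subst ln_le_cancel_iff) auto
  have tb: "\<bar>t\<bar> * bd \<le> sqrt (real n) / 4"
  proof -
    have "\<bar>t\<bar> \<le> L" using tn lnn by linarith
    also have "\<dots> \<le> L * (sqrt (real n) * a)" using sqna L by (simp add: mult_le_cancel_left1)
    finally have "\<bar>t\<bar> \<le> sqrt (real n) * a * L" by (simp add: mult_ac)
    thus ?thesis unfolding bd_def using a0 L by (simp add: divide_simps mult_ac)
  qed
  have gbd: "AE x in M01. \<bar>\<gamma> x - k\<bar> \<le> bd"
    using M01_AE[OF gb] unfolding cen bd_def L_def .
  have helI: "integral\<^sup>L M01 (\<lambda>x. (sqrt (f x) - sqrt (f0 x))\<^sup>2) \<le> a\<^sup>2"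
  proof -
    define I where "I = integral\<^sup>L M01 (\<lambda>x. (sqrt (f x) - sqrt (f0 x))\<^sup>2)"
    have I0: "I \<ge> 0" unfolding I_def by (intro Bochner_Integration.integral_nonneg) simp
    have "sqrt I \<le> a" using hel unfolding hellinger_def I_def M01_integral .
    hence "(sqrt I)\<^sup>2 \<le> a\<^sup>2" using I0 by (intro power_mono) auto
    thus ?thesis using I0 unfolding I_def by simp
  qed
  have bh: "2 * bd\<^sup>2 * a\<^sup>2 \<le> 1"
  proof -
    have "bd * a = 1 / (4 * L)" unfolding bd_def using a0 by simp
    hence "2 * bd\<^sup>2 * a\<^sup>2 = 2 * (1 / (4 * L))\<^sup>2" by (simp add: power_mult_distrib[symmetric] mult_ac)
    also have "\<dots> = 1 / (8 * L\<^sup>2)" by (simp add: power2_eq_square)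
    also have "\<dots> \<le> 1"
    proof -
      have "L\<^sup>2 \<ge> (2/3)\<^sup>2" using L by (intro power_mono) auto
      hence "8 * L\<^sup>2 \<ge> 1" by (simp add: power2_eq_square)
      thus ?thesis by (simp add: divide_le_eq)
    qed
    finally show ?thesis .
  qed
  have ig0: "integrable M01 (\<lambda>y. f0 y * \<gamma> y)" by (rule int_mult_bdd[OF if0 gm gB])
  have kM: "k = integral\<^sup>L M01 (\<lambda>y. \<gamma> y * f0 y)" unfolding k_def M01_integral ..
  have zero: "integral\<^sup>L M01 (\<lambda>y. (\<gamma> y - k) * f0 y) = 0"
  proof -
    have "integral\<^sup>L M01 (\<lambda>y. (\<gamma> y - k) * f0 y) = integral\<^sup>L M01 (\<lambda>y. f0 y * \<gamma> y - k * f0 y)"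
      by (simp add: algebra_simps)
    also have "\<dots> = integral\<^sup>L M01 (\<lambda>y. f0 y * \<gamma> y) - k * integral\<^sup>L M01 f0" using ig0 if0 by simp
    finally show ?thesis using f01 kM by (simp add: mult.commute)
  qed
  have mm: "integral\<^sup>L M01 (\<lambda>x. (\<gamma> x - k)\<^sup>2 * f0 x) \<le> m\<^sup>2"
  proof -
    have cc: "center f0 (center f0 \<gamma>) = (\<lambda>x. \<gamma> x - k)"
      unfolding center_def[of f0 "center f0 \<gamma>"] unfolding cen M01_integral zero by simp
    define I where "I = integral\<^sup>L M01 (\<lambda>x. (\<gamma> x - k)\<^sup>2 * f0 x)"
    have I0: "I \<ge> 0" unfolding I_def using f0nn by (intro Bochner_Integration.integral_nonneg) auto
    have "sqrt I \<le> m" using nL unfolding normL_def cc I_def M01_integral .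
    hence "(sqrt I)\<^sup>2 \<le> m\<^sup>2" using I0 by (intro power_mono) auto
    thus ?thesis using I0 unfolding I_def by simp
  qed
  have core': "integral\<^sup>L M01 (\<lambda>x. f x * exp (- t * (\<gamma> x - k) / sqrt (real n))) > 0 \<and>
   t * sqrt (real n) * integral\<^sup>L M01 (\<lambda>x. (f x - f0 x) * \<gamma> x)
    + real n * ln (integral\<^sup>L M01 (\<lambda>x. f x * exp (- t * (\<gamma> x - k) / sqrt (real n)))) \<le> (2*m\<^sup>2+1)*t\<^sup>2"
    by (rule core[OF M01_fin _ fm f0m gm fc' c f0nn iff if0 f1 f01 gB kM gbd bd0 tb _ helI bh mm])
       (use M01_meas n in auto)
  define Z where "Z = integral\<^sup>L M01 (\<lambda>x. f x * exp (- t * (\<gamma> x - k) / sqrt (real n)))"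
  have Zpos: "Z > 0" and key: "t * sqrt (real n) * inner2 (\<lambda>x. f x - f0 x) \<gamma> + real n * ln Z \<le> (2*m\<^sup>2+1)*t\<^sup>2"
    using core' unfolding Z_def inner2_def M01_integral by auto
  have tilt: "tilt n t (center f0 \<gamma>) f = (\<lambda>x. f x * exp (- t * (\<gamma> x - k) / sqrt (real n)) / Z)"
    unfolding tilt_def cen Z_def M01_integral ..
  have lt: "loglik n X (tilt n t (center f0 \<gamma>) f) = loglik n X f - t * Wn f0 n X \<gamma> - real n * ln Z"
  proof -
    have "loglik n X (tilt n t (center f0 \<gamma>) f)
        = (\<Sum>i=1..n. ln (f (X i)) - t * (\<gamma> (X i) - k) / sqrt (real n) - ln Z)"
      unfolding loglik_def tilt
    proof (rule sum.cong[OF refl])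
      fix i assume i: "i \<in> {1..n}"
      have "f (X i) > 0" using fc Xs i c by force
      thus "ln (f (X i) * exp (- t * (\<gamma> (X i) - k) / sqrt (real n)) / Z)
          = ln (f (X i)) - t * (\<gamma> (X i) - k) / sqrt (real n) - ln Z"
        using Zpos by (simp add: ln_div ln_mult)
    qed
    also have "\<dots> = loglik n X f - (\<Sum>i=1..n. t * (\<gamma> (X i) - k) / sqrt (real n)) - real n * ln Z"
      unfolding loglik_def by (simp add: sum_subtractf)
    also have "(\<Sum>i=1..n. t * (\<gamma> (X i) - k) / sqrt (real n)) = t * Wn f0 n X \<gamma>"
      unfolding Wn_def cen by (simp add: sum_divide_distrib sum_distrib_left)
    finally show ?thesis .
  qed
  show ?thesis
    unfolding exp_add[symmetric] lt using key by simp
qed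



lemma nn_cmult_le:
  fixes r :: real assumes r: "r > 0"
  shows "(\<integral>\<^sup>+ x. ennreal r * g x \<partial>M) \<le> ennreal r * integral\<^sup>N M g"
  unfolding nn_integral_def
proof (rule SUP_least)
  fix s assume "s \<in> {s. simple_function M s \<and> s \<le> (\<lambda>x. ennreal r * g x)}"
  hence s: "simple_function M s" "\<And>x. s x \<le> ennreal r * g x" by (auto simp: le_fun_def)
  define s' where "s' = (\<lambda>x. ennreal (1/r) * s x)"
  have sf: "simple_function M s'" unfolding s'_def using s(1) by (auto intro: simple_function_mult)
  have eq: "s x = ennreal r * s' x" for x
    unfolding s'_def using r by (simp add: mult.assoc[symmetric] ennreal_mult[symmetric])
  have le: "s' x \<le> g x" for x
  proof -
    have "s' x \<le> ennreal (1/r) * (ennreal r * g x)" unfolding s'_def using s(2)[of x] by (rule mult_left_mono) simp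
    also have "\<dots> = g x" using r by (simp add: mult.assoc[symmetric] ennreal_mult[symmetric])
    finally show ?thesis .
  qed
  have "integral\<^sup>S M s = ennreal r * integral\<^sup>S M s'"
    by (subst eq[abs_def]) (rule simple_integral_mult[OF sf])
  also have "integral\<^sup>S M s' \<le> (SUP s\<in>{s. simple_function M s \<and> s \<le> g}. integral\<^sup>S M s)"
    using sf le by (intro SUP_upper) (auto simp: le_fun_def)
  hence "ennreal r * integral\<^sup>S M s' \<le> ennreal r * (SUP s\<in>{s. simple_function M s \<and> s \<le> g}. integral\<^sup>S M s)"
    by (rule mult_left_mono) simp
  finally show "integral\<^sup>S M s \<le> ennreal r * (SUP s\<in>{s. simple_function M s \<and> s \<le> g}. integral\<^sup>S M s)" .
qed

theorem lemma3:
  fixes m D0 :: real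
  assumes "m > 0"
  shows "\<exists>C>0. \<forall>(f0::real \<Rightarrow> real) (a::nat \<Rightarrow> real) (Pri::nat \<Rightarrow> (real \<Rightarrow> real) measure) (\<gamma>::nat \<Rightarrow> real \<Rightarrow> real).
     density01 f0 \<and> (\<exists>\<rho>0>0. \<forall>x\<in>{0..1}. \<rho>0 \<le> f0 x) \<and> (\<forall>x\<in>{0..1}. f0 x \<le> D0)
     \<and> (\<forall>n\<ge>1. real n * (a n)\<^sup>2 \<ge> 1)
     \<and> (\<forall>n\<ge>1. prob_space (Pri n) \<and>
          (AE f in Pri n. density01 f \<and> (\<exists>c>0. \<exists>B. \<forall>x\<in>{0..1}. c \<le> f x \<and> f x \<le> B)
                         \<and> hellinger f f0 \<le> a n))
     \<and> (\<forall>n. Linf01 (\<gamma> n))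
     \<and> (\<forall>n\<ge>1. normL f0 (center f0 (\<gamma> n)) \<le> m
          \<and> (AE x in lborel. x \<in> {0..1} \<longrightarrow>
               \<bar>center f0 (\<gamma> n) x\<bar> \<le> 1 / (4 * a n * ln (real n + 1))))
     \<longrightarrow> (\<forall>n\<ge>1. \<forall>t::real. \<bar>t\<bar> \<le> ln (real n) \<longrightarrow>
          (\<forall>X::nat \<Rightarrow> real. (\<forall>i\<in>{1..n}. X i \<in> {0..1}) \<longrightarrow>
            post_exp (Pri n) n X (\<lambda>f. exp (t * sqrt (real n) * inner2 (\<lambda>x. f x - f0 x) (\<gamma> n)))
            \<le> ennreal (exp (C * t\<^sup>2 + t * Wn f0 n X (\<gamma> n)))
               * (\<integral>\<^sup>+ f. ennreal (exp (loglik n X (tilt n t (center f0 (\<gamma> n)) f) - loglik n X f0)) \<partial>Pri n)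
               / (\<integral>\<^sup>+ f. ennreal (exp (loglik n X f - loglik n X f0)) \<partial>Pri n)))"
proof (intro exI[of _ "2*m\<^sup>2+1"] conjI allI impI)
  show "2*m\<^sup>2+1 > (0::real)" by (simp add: add_nonneg_pos)
  fix f0 :: "real \<Rightarrow> real" and a :: "nat \<Rightarrow> real" and Pri :: "nat \<Rightarrow> (real \<Rightarrow> real) measure"
    and \<gamma> :: "nat \<Rightarrow> real \<Rightarrow> real" and n :: nat and t :: real and X :: "nat \<Rightarrow> real"
  assume H: "density01 f0 \<and> (\<exists>\<rho>0>0. \<forall>x\<in>{0..1}. \<rho>0 \<le> f0 x) \<and> (\<forall>x\<in>{0..1}. f0 x \<le> D0)
     \<and> (\<forall>n\<ge>1. real n * (a n)\<^sup>2 \<ge> 1)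
     \<and> (\<forall>n\<ge>1. prob_space (Pri n) \<and>
          (AE f in Pri n. density01 f \<and> (\<exists>c>0. \<exists>B. \<forall>x\<in>{0..1}. c \<le> f x \<and> f x \<le> B)
                         \<and> hellinger f f0 \<le> a n))
     \<and> (\<forall>n. Linf01 (\<gamma> n))
     \<and> (\<forall>n\<ge>1. normL f0 (center f0 (\<gamma> n)) \<le> m
          \<and> (AE x in lborel. x \<in> {0..1} \<longrightarrow>
               \<bar>center f0 (\<gamma> n) x\<bar> \<le> 1 / (4 * a n * ln (real n + 1))))"
    and n: "n \<ge> 1" and tn: "\<bar>t\<bar> \<le> ln (real n)" and Xs: "\<forall>i\<in>{1..n}. X i \<in> {0..1}"
  have d0: "density01 f0" using H by blast
  have na: "real n * (a n)\<^sup>2 \<ge> 1" using H n by blast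
  have AEQ: "AE f in Pri n. density01 f \<and> (\<exists>c>0. \<exists>B. \<forall>x\<in>{0..1}. c \<le> f x \<and> f x \<le> B)
                         \<and> hellinger f f0 \<le> a n" using H n by blast
  have Lg: "Linf01 (\<gamma> n)" using H by blast
  have nL: "normL f0 (center f0 (\<gamma> n)) \<le> m" using H n by blast
  have gb: "AE x in lborel. x \<in> {0..1} \<longrightarrow> \<bar>center f0 (\<gamma> n) x\<bar> \<le> 1 / (4 * a n * ln (real n + 1))"
    using H n by blast
  define C where "C = 2*m\<^sup>2+1"
  define K where "K = exp (C * t\<^sup>2 + t * Wn f0 n X (\<gamma> n))"
  define L0 where "L0 = loglik n X f0"
  define \<phi> where "\<phi> = (\<lambda>f. exp (t * sqrt (real n) * inner2 (\<lambda>x. f x - f0 x) (\<gamma> n)))"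
  define ft where "ft = (\<lambda>f. tilt n t (center f0 (\<gamma> n)) f)"
  define N where "N = (\<integral>\<^sup>+ f. ennreal (\<phi> f * exp (loglik n X f)) \<partial>Pri n)"
  define Z where "Z = (\<integral>\<^sup>+ f. ennreal (exp (loglik n X f)) \<partial>Pri n)"
  define N' where "N' = (\<integral>\<^sup>+ f. ennreal (exp (loglik n X (ft f) - L0)) \<partial>Pri n)"
  define Z' where "Z' = (\<integral>\<^sup>+ f. ennreal (exp (loglik n X f - L0)) \<partial>Pri n)"
  have Kpos: "K > 0" unfolding K_def by simp
  have pt: "AE f in Pri n. ennreal (\<phi> f * exp (loglik n X f)) \<le> ennreal (K * exp L0) * ennreal (exp (loglik n X (ft f) - L0))"
    using AEQ
  proof eventually_elim
    case (elim f)
    then obtain c B where df: "density01 f" and c: "c > 0" and fc: "\<forall>x\<in>{0..1}. c \<le> f x"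
      and hel: "hellinger f f0 \<le> a n" by blast
    have "\<phi> f * exp (loglik n X f) \<le> K * exp L0 * exp (loglik n X (ft f) - L0)"
      unfolding \<phi>_def K_def L0_def ft_def C_def
      by (rule pointwise[OF d0 df c fc hel na n Lg nL gb tn Xs])
    hence "ennreal (\<phi> f * exp (loglik n X f)) \<le> ennreal (K * exp L0 * exp (loglik n X (ft f) - L0))"
      by (rule ennreal_leI)
    thus ?case using Kpos by (simp add: ennreal_mult)
  qed
  have N_le: "N \<le> ennreal (K * exp L0) * N'"
  proof -
    have "N \<le> (\<integral>\<^sup>+ f. ennreal (K * exp L0) * ennreal (exp (loglik n X (ft f) - L0)) \<partial>Pri n)"
      unfolding N_def by (rule nn_integral_mono_AE[OF pt])
    also have "\<dots> \<le> ennreal (K * exp L0) * N'" unfolding N'_def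
      by (rule nn_cmult_le) (use Kpos in simp)
    finally show ?thesis .
  qed
  have Z'eq: "Z' = ennreal (exp (- L0)) * Z"
  proof (rule antisym)
    have e: "(\<lambda>f. ennreal (exp (loglik n X f - L0))) = (\<lambda>f. ennreal (exp (- L0)) * ennreal (exp (loglik n X f)))"
      by (rule ext) (simp add: ennreal_mult[symmetric] exp_add[symmetric])
    show "Z' \<le> ennreal (exp (- L0)) * Z" unfolding Z'_def e Z_def by (rule nn_cmult_le) simp
    have e2: "(\<lambda>f. ennreal (exp (loglik n X f))) = (\<lambda>f. ennreal (exp L0) * ennreal (exp (loglik n X f - L0)))"
      by (rule ext) (simp add: ennreal_mult[symmetric] exp_add[symmetric])
    have "Z \<le> ennreal (exp L0) * Z'" unfolding Z_def e2 Z'_def by (rule nn_cmult_le) simp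
    hence "ennreal (exp (- L0)) * Z \<le> ennreal (exp (- L0)) * (ennreal (exp L0) * Z')"
      by (rule mult_left_mono) simp
    also have "\<dots> = Z'" by (simp add: mult.assoc[symmetric] ennreal_mult[symmetric] exp_add[symmetric])
    finally show "ennreal (exp (- L0)) * Z \<le> Z'" .
  qed
  have inv: "inverse (ennreal (exp (- L0)) * Z) = ennreal (exp L0) * inverse Z"
  proof -
    have "inverse (ennreal (exp (- L0)) * Z) = inverse (ennreal (exp (- L0))) * inverse Z"
      by (rule ennreal_inverse_mult') simp
    also have "inverse (ennreal (exp (- L0))) = ennreal (exp L0)"
      by (simp add: inverse_ennreal exp_minus)
    finally show ?thesis .
  qed
  have "N / Z \<le> ennreal (K * exp L0) * N' / Z"
    using N_le by (simp add: divide_ennreal_def mult_right_mono)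
  also have "\<dots> = ennreal K * N' / Z'"
    unfolding divide_ennreal_def Z'eq inv using Kpos by (simp add: ennreal_mult mult_ac)
  finally show "post_exp (Pri n) n X (\<lambda>f. exp (t * sqrt (real n) * inner2 (\<lambda>x. f x - f0 x) (\<gamma> n)))
            \<le> ennreal (exp ((2*m\<^sup>2+1) * t\<^sup>2 + t * Wn f0 n X (\<gamma> n)))
               * (\<integral>\<^sup>+ f. ennreal (exp (loglik n X (tilt n t (center f0 (\<gamma> n)) f) - loglik n X f0)) \<partial>Pri n)
               / (\<integral>\<^sup>+ f. ennreal (exp (loglik n X f - loglik n X f0)) \<partial>Pri n)"
    unfolding post_exp_def N_def Z_def N'_def Z'_def K_def C_def \<phi>_def ft_def L0_def .
qed

end
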